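(* Let $x\cdot y$ be a PA-structure on $(\mathfrak{g},\mathfrak{n})$, where $\mathfrak{g}$ is abelian and $\mathfrak{n}$ is $2$-step nilpotent. Then for all $p,q,x\in V$ with $\{x,p\}=\{x,q\}=0$ we have $x\cdot\{p,q\}=0$.
   Context: Let $K$ be a field of characteristic zero and $V$ a finite-dimensional vector space over $K$. Let $\mathfrak{g}=(V,[\,,])$ and $\mathfrak{n}=(V,\{\,,\})$ be two Lie algebra structures on $V$. A post-Lie algebra structure (PA-structure) on the pair $(\mathfrak{g},\mathfrak{n})$ is a $K$-bilinear product $x\cdot y$ on $V$ satisfying, for all $x,y,z\in V$: (i) $x\cdot y-y\cdot x=[x,y]-\{x,y\}$; (ii) $[x,y]\cdot z=x\cdot(y\cdot z)-y\cdot(x\cdot z)$; (iii) $x\cdot\{y,z\}=\{x\cdot y,z\}+\{y,x\cdot z\}$. A Lie algebra is called $2$-step nilpotent here if it is nilpotent of class at most $2$. *)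

theory Defs
  imports Complex_Main
begin

text \<open>A K-vector space V is modelled by a type 'v :: ab_group_add with a scalar
multiplication scale :: 'k \<Rightarrow> 'v \<Rightarrow> 'v satisfying the library locale
vector_space; finite dimensionality via finite_dimensional_vector_space.\<close>

definition bilinear_map :: "('k \<Rightarrow> 'v::ab_group_add \<Rightarrow> 'v) \<Rightarrow> ('v \<Rightarrow> 'v \<Rightarrow> 'v) \<Rightarrow> bool" where
  "bilinear_map scale f \<longleftrightarrow>
     (\<forall>x y z. f (x + y) z = f x z + f y z) \<and>
     (\<forall>x y z. f x (y + z) = f x y + f x z) \<and>
     (\<forall>a x y. f (scale a x) y = scale a (f x y)) \<and>
     (\<forall>a x y. f x (scale a y) = scale a (f x y))"

definition lie_bracket :: "('k \<Rightarrow> 'v::ab_group_add \<Rightarrow> 'v) \<Rightarrow> ('v \<Rightarrow> 'v \<Rightarrow> 'v) \<Rightarrow> bool" where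
  "lie_bracket scale br \<longleftrightarrow>
     bilinear_map scale br \<and>
     (\<forall>x. br x x = 0) \<and>
     (\<forall>x y z. br x (br y z) + br y (br z x) + br z (br x y) = 0)"

definition abelian_lie :: "('v \<Rightarrow> 'v \<Rightarrow> 'v::zero) \<Rightarrow> bool" where
  "abelian_lie br \<longleftrightarrow> (\<forall>x y. br x y = 0)"

definition two_step_nilpotent :: "('v \<Rightarrow> 'v \<Rightarrow> 'v::zero) \<Rightarrow> bool" where
  "two_step_nilpotent br \<longleftrightarrow> (\<forall>x y z. br (br x y) z = 0)"

text \<open>Post-Lie algebra structure on the pair (g, n), g = (V, lb), n = (V, nb).\<close>
definition PA_structure ::
  "('k \<Rightarrow> 'v::ab_group_add \<Rightarrow> 'v) \<Rightarrow> ('v \<Rightarrow> 'v \<Rightarrow> 'v) \<Rightarrow> ('v \<Rightarrow> 'v \<Rightarrow> 'v) \<Rightarrow> ('v \<Rightarrow> 'v \<Rightarrow> 'v) \<Rightarrow> bool" where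
  "PA_structure scale lb nb pr \<longleftrightarrow>
     bilinear_map scale pr \<and>
     (\<forall>x y. pr x y - pr y x = lb x y - nb x y) \<and>
     (\<forall>x y z. pr (lb x y) z = pr x (pr y z) - pr y (pr x z)) \<and>
     (\<forall>x y z. pr x (nb y z) = nb (pr x y) z + nb y (pr x z))"

end

theory Submission
  imports Defs
begin

lemma bil_facts:
  assumes "bilinear_map scale f"
  shows "f x 0 = 0" "f 0 x = 0" "f x (-y) = - f x y" "f (-x) y = - f x y"
    "f x (y - z) = f x y - f x z" "f (x - y) z = f x z - f y z"
    "f (x + y) z = f x z + f y z" "f x (y + z) = f x y + f x z"
proof -
  have a1: "\<And>x y z. f (x + y) z = f x z + f y z" and a2: "\<And>x y z. f x (y + z) = f x y + f x z"
    using assms unfolding bilinear_map_def by auto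
  show z1: "f x 0 = 0" using a2[of x 0 0] by simp
  show z2: "f 0 x = 0" using a1[of 0 0 x] by simp
  show n1: "f x (-y) = - f x y" using a2[of x y "-y"] z1 by (simp add: eq_neg_iff_add_eq_0 add.commute)
  show n2: "f (-x) y = - f x y" using a1[of x "-x" y] a1[of 0 0 y] by (simp add: eq_neg_iff_add_eq_0 add.commute)
  have N1: "\<And>x y. f x (-y) = - f x y" using a2 a2[of _ 0 0] by (metis add.right_inverse add_right_cancel add_0 minus_unique)
  have N2: "\<And>x y. f (-x) y = - f x y" using a1 a1[of 0 0] by (metis add.right_inverse add_right_cancel add_0 minus_unique)
  show "f x (y - z) = f x y - f x z" using a2[of x y "-z"] N1[of x z] by simp
  show "f (x - y) z = f x z - f y z" using a1[of x "-y" z] N2[of y z] by simp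
  show "f (x + y) z = f x z + f y z" by (rule a1)
  show "f x (y + z) = f x y + f x z" by (rule a2)
qed

theorem lemma4p10:
  fixes scale :: "'k::field_char_0 \<Rightarrow> 'v::ab_group_add \<Rightarrow> 'v"
    and basis :: "'v set"
    and lb nb pr :: "'v \<Rightarrow> 'v \<Rightarrow> 'v"
    and p q x :: 'v
  assumes "finite_dimensional_vector_space scale basis"
    and "lie_bracket scale lb"
    and "lie_bracket scale nb"
    and "PA_structure scale lb nb pr"
    and "abelian_lie lb"
    and "two_step_nilpotent nb"
    and "nb x p = 0"
    and "nb x q = 0"
  shows "pr x (nb p q) = 0"
proof -
  have bn: "bilinear_map scale nb" and alt: "\<And>a. nb a a = 0"
    using assms(3) unfolding lie_bracket_def by auto
  have bp: "bilinear_map scale pr" and swp: "\<And>a b. pr a b - pr b a = lb a b - nb a b"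
    and der: "\<And>a b c. pr a (nb b c) = nb (pr a b) c + nb b (pr a c)"
    using assms(4) unfolding PA_structure_def by auto
  have lb0: "\<And>a b. lb a b = 0" using assms(5) unfolding abelian_lie_def by auto
  have cen: "\<And>a b c. nb (nb a b) c = 0" using assms(6) unfolding two_step_nilpotent_def by auto
  note nf = bil_facts[OF bn] and pf = bil_facts[OF bp]
  have anti: "\<And>a b. nb a b = - nb b a"
  proof -
    fix a b
    have "nb (a+b) (a+b) = 0" by (rule alt)
    hence "nb a a + nb a b + (nb b a + nb b b) = 0" by (simp add: nf add_ac)
    hence "nb a b + nb b a = 0" using alt[of a] alt[of b] by simp
    thus "nb a b = - nb b a" by (simp add: eq_neg_iff_add_eq_0)
  qed
  have cen2: "\<And>a b c. nb c (nb a b) = 0" using anti cen by (metis neg_equal_0_iff_equal)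
  have sw: "\<And>a b. pr b a = pr a b + nb a b"
    using swp lb0 by (metis add.commute diff_add_cancel diff_0 minus_diff_eq diff_minus_eq_add)
  have K: "\<And>y z w. nb y z = 0 \<Longrightarrow> nb (pr y w) z = nb (pr z w) y"
  proof -
    fix y z w assume h: "nb y z = 0"
    have "0 = pr w (nb y z)" using h pf by simp
    also have "\<dots> = nb (pr w y) z + nb y (pr w z)" by (rule der)
    also have "pr w y = pr y w - nb w y" using sw[of w y] anti[of w y] by simp
    also have "pr w z = pr z w - nb w z" using sw[of w z] anti[of w z] by simp
    also have "nb (pr y w - nb w y) z + nb y (pr z w - nb w z) = nb (pr y w) z - nb (pr z w) y"
      using cen cen2 anti[of y "pr z w"] by (simp add: nf)
    finally show "nb (pr y w) z = nb (pr z w) y" by simp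
  qed
  have e1: "nb (pr x q) p = nb (pr p q) x" using K[OF assms(7)] .
  have e2: "nb (pr x p) q = nb (pr q p) x" using K[OF assms(8)] .
  have "pr x (nb p q) = nb (pr x p) q + nb p (pr x q)" by (rule der)
  also have "\<dots> = nb (pr q p) x - nb (pr p q) x" using e1 e2 anti[of p "pr x q"] by simp
  also have "\<dots> = nb (pr q p - pr p q) x" by (simp add: nf)
  also have "pr q p - pr p q = nb p q" using sw[of p q] anti[of q p] by simp
  finally show ?thesis using cen by simp
qed

end
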